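(* Let $\lambda\neq 0$ be real, let $r\ge 1$ and $a_1,\dots,a_r\ge 1$ be integers, and let $G$ be the threshold graph with block sequence $0^{a_1}1^{a_2}0^{a_3}\cdots b_r^{a_r}$ and bags $B_1,\dots,B_r$. Let $\epsilon_{i,j}$ ($1\le i<j\le r$, $j$ even) be arbitrary nonzero reals, and define for $1\le i\le r$: $p_i=0,\ \epsilon_i=0$ if $i\equiv 1\pmod 4$; $p_i=\frac{\lambda(a_i-1)}{a_i},\ \epsilon_i=-\frac{\lambda}{a_i}$ if $i\equiv 2\pmod 4$; $p_i=\lambda,\ \epsilon_i=0$ if $i\equiv 3\pmod 4$; $p_i=\frac{\lambda}{a_i},\ \epsilon_i=\frac{\lambda}{a_i}$ if $i\equiv 0\pmod 4$. Let $M$ be the uniform weighted matrix of $G$ with these parameters. Let $T_1$ be the single-vertex-bag weighted threshold matrix on $v_1,\dots,v_r$ with vertex weights $p^{(1)}_i=0$ if $i\equiv 1,2\pmod 4$ and $p^{(1)}_i=\lambda$ if $i\equiv 0,3\pmod 4$, and edge weights $\epsilon^{(1)}_{i,j}=\epsilon_{i,j}\sqrt{a_ia_j}$ ($i<j$, $j$ even). Then, as multisets, $$\mathrm{Spec}(M)=\mathrm{Spec}(T_1)\cup\{0^{[A]},\lambda^{[B]}\},$$ where $A=\sum_{1\le i\le r,\ i\equiv 0,1 \ (\mathrm{mod}\ 4)}(a_i-1)$ and $B=\sum_{1\le i\le r,\ i\equiv 2,3\ (\mathrm{mod}\ 4)}(a_i-1)$, and $x^{[m]}$ denotes $m$ copies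 of $x$.
   Context: Threshold graph with block sequence $0^{a_1}1^{a_2}0^{a_3}1^{a_4}\cdots b_r^{a_r}$ ($a_i\ge 1$, $b_i=0$ for $i$ odd and $b_i=1$ for $i$ even): its vertex set is partitioned into bags $B_1,\dots,B_r$ with $|B_i|=a_i$ (added in this order, the vertices of $B_i$ being added as isolated vertices if $i$ is odd and as dominating vertices if $i$ is even); two distinct vertices $u\in B_i$, $v\in B_j$ with $i\le j$ are adjacent if and only if $j$ is even. Uniform weighted matrix: given reals $p_i$, $\epsilon_i$ ($\epsilon_i\ne0$ when $i$ is even) and nonzero reals $\epsilon_{i,j}$ ($i<j$, $j$ even), it is the symmetric matrix $M$ indexed by the vertices with $M_{vv}=p_i$ for $v\in B_i$; $M_{uv}=\epsilon_i$ for distinct $u,v\in B_i$ with $i$ even; $M_{uv}=\epsilon_{i,j}$ for $u\in B_i$, $v\in B_j$, $i<j$, $j$ even; and all other entries $0$. A single-vertex-bag weighted threshold matrix on $v_k,\dots,v_r$ (the case $a_i=1$ for all $i$, with indices starting at $k$) is the symmetric matrix indexed by $v_k,\dots,v_r$ with diagonal entries $p_i$ and, for $i<j$, entry $\epsilon_{i,j}\ne 0$ at $(v_i,v_j)$ if $j$ is even and $0$ if $j$ is odd. $\mathrm{Spec}$ denotes the multiset of eigenvalues, and $\cup$ of multisets adds multiplicities. *)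

theory Defs
  imports "Jordan_Normal_Form.Char_Poly" "HOL-Computational_Algebra.Polynomial"
begin

definition Spec :: "real mat \<Rightarrow> complex multiset" where
  "Spec M = proots (char_poly (map_mat complex_of_real M))"

text \<open>Bags B_1..B_r; vertices are 0,..,n-1 with n = a_1+...+a_r, bag B_i consisting
  of the consecutive vertices offs a i, ..., offs a i + a i - 1.\<close>
definition offs :: "(nat \<Rightarrow> nat) \<Rightarrow> nat \<Rightarrow> nat" where
  "offs a i = (\<Sum>j\<in>{1..<i}. a j)"

definition nverts :: "(nat \<Rightarrow> nat) \<Rightarrow> nat \<Rightarrow> nat" where
  "nverts a r = (\<Sum>j\<in>{1..r}. a j)"

definition bag :: "(nat \<Rightarrow> nat) \<Rightarrow> nat \<Rightarrow> nat" where
  "bag a v = (LEAST i. v < offs a (Suc i))"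

text \<open>Threshold graph with block sequence 0^{a_1} 1^{a_2} ... : distinct u in B_i,
  v in B_j (i <= j) are adjacent iff j is even.\<close>
definition thr_adj :: "(nat \<Rightarrow> nat) \<Rightarrow> nat \<Rightarrow> nat \<Rightarrow> bool" where
  "thr_adj a u v = (u \<noteq> v \<and> even (max (bag a u) (bag a v)))"

definition uniform_weighted_matrix ::
  "(nat \<Rightarrow> nat) \<Rightarrow> nat \<Rightarrow> (nat \<Rightarrow> real) \<Rightarrow> (nat \<Rightarrow> real) \<Rightarrow> (nat \<Rightarrow> nat \<Rightarrow> real) \<Rightarrow> real mat" where
  "uniform_weighted_matrix a r p eps epsij =
     mat (nverts a r) (nverts a r) (\<lambda>(u, v).
       let i = bag a u; j = bag a v in
       if u = v then p i
       else if \<not> thr_adj a u v then 0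
       else if i = j then eps i
       else epsij (min i j) (max i j))"

definition single_thr_matrix ::
  "nat \<Rightarrow> nat \<Rightarrow> (nat \<Rightarrow> real) \<Rightarrow> (nat \<Rightarrow> nat \<Rightarrow> real) \<Rightarrow> real mat" where
  "single_thr_matrix k r p epsij =
     mat (Suc r - k) (Suc r - k) (\<lambda>(s, t).
       let i = k + s; j = k + t in
       if i = j then p i
       else if even (max i j) then epsij (min i j) (max i j)
       else 0)"

end

theory Submission
  imports Defs
begin


lemma offs_Suc: "1 \<le> i \<Longrightarrow> offs a (Suc i) = offs a i + a i"
  unfolding offs_def by (simp add: sum.atLeastLessThan_Suc)

lemma offs_mono: "i \<le> j \<Longrightarrow> offs a i \<le> offs a j"
  unfolding offs_def by (rule sum_mono2) auto

lemma offs_1[simp]: "offs a 1 = 0" "offs a 0 = 0" "offs a (Suc 0) = 0" unfolding offs_def by auto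

lemma nverts_offs: "nverts a r = offs a (Suc r)"
  unfolding nverts_def offs_def by (metis atLeastLessThanSuc_atLeastAtMost)

lemma bag_eq: assumes "1 \<le> i" "offs a i \<le> v" "v < offs a i + a i"
  shows "bag a v = i"
  unfolding bag_def
proof (rule Least_equality)
  show "v < offs a (Suc i)" using assms offs_Suc by simp
  fix y assume "v < offs a (Suc y)"
  show "i \<le> y"
  proof (rule ccontr)
    assume "\<not> i \<le> y" then have "Suc y \<le> i" by simp
    from offs_mono[OF this, of a] \<open>v < offs a (Suc y)\<close> assms show False by simp
  qed
qed

lemma bag_props: assumes "v < offs a (Suc r)"
  shows "1 \<le> bag a v" "bag a v \<le> r" "offs a (bag a v) \<le> v" "v < offs a (bag a v) + a (bag a v)"
proof -
  have ex: "v < offs a (Suc r)" by fact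
  have le: "bag a v \<le> r" unfolding bag_def by (rule Least_le[THEN order_trans], rule ex, simp)
  have lt: "v < offs a (Suc (bag a v))" unfolding bag_def by (rule LeastI[of "\<lambda>i. v < offs a (Suc i)" r, OF ex])
  have ge1: "1 \<le> bag a v"
  proof (rule ccontr)
    assume "\<not> 1 \<le> bag a v" then have "bag a v = 0" by simp
    with lt show False by simp
  qed
  have "offs a (bag a v) \<le> v"
  proof -
    obtain j where j: "bag a v = Suc j" using ge1 by (cases "bag a v") auto
    have "\<not> v < offs a (Suc j)" using not_less_Least[of j "\<lambda>i. v < offs a (Suc i)"] j unfolding bag_def by simp
    then show ?thesis using j by simp
  qed
  then show "1 \<le> bag a v" "bag a v \<le> r" "offs a (bag a v) \<le> v" "v < offs a (bag a v) + a (bag a v)"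
    using ge1 le lt offs_Suc[OF ge1] by auto
qed

lemma bag_range: assumes "1 \<le> i" "i \<le> r"
  shows "offs a i + a i \<le> offs a (Suc r)"
  using offs_Suc[OF assms(1)] offs_mono[of "Suc i" "Suc r" a] assms by simp

lemma sum_bag: assumes "1 \<le> i" "i \<le> r"
  shows "(\<Sum>v<offs a (Suc r). if bag a v = i then f v else 0) = (\<Sum>v\<in>{offs a i..<offs a i + a i}. f v)"
proof -
  have "(\<Sum>v<offs a (Suc r). if bag a v = i then f v else 0) = (\<Sum>v\<in>{v. v < offs a (Suc r) \<and> bag a v = i}. f v)"
    using sum.inter_filter[of "{..<offs a (Suc r)}" f "\<lambda>v. bag a v = i"] by (simp add: lessThan_def)
  also have "{v. v < offs a (Suc r) \<and> bag a v = i} = {offs a i..<offs a i + a i}"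
  proof (intro equalityI subsetI)
    fix v assume "v \<in> {v. v < offs a (Suc r) \<and> bag a v = i}"
    then show "v \<in> {offs a i..<offs a i + a i}" using bag_props(3,4)[of v a r] by auto
  next
    fix v assume "v \<in> {offs a i..<offs a i + a i}"
    then show "v \<in> {v. v < offs a (Suc r) \<and> bag a v = i}"
      using bag_eq[OF assms(1), of a v] bag_range[OF assms, of a] by auto
  qed
  finally show ?thesis .
qed

lemma prod_bag: "(\<Prod>v<offs a (Suc r). g (bag a v)) = (\<Prod>i\<in>{1..r}. g i ^ a i)"
proof (induction r)
  case 0 then show ?case by simp
next
  case (Suc r)
  have os: "offs a (Suc (Suc r)) = offs a (Suc r) + a (Suc r)" by (rule offs_Suc) simp
  have "(\<Prod>v<offs a (Suc (Suc r)). g (bag a v)) = (\<Prod>v<offs a (Suc r). g (bag a v)) * (\<Prod>v\<in>{offs a (Suc r)..<offs a (Suc r) + a (Suc r)}. g (bag a v))"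
    unfolding os by (simp add: prod.atLeastLessThan_concat[symmetric] lessThan_atLeast0 del: prod.op_ivl_Suc)
  also have "(\<Prod>v\<in>{offs a (Suc r)..<offs a (Suc r) + a (Suc r)}. g (bag a v)) = (\<Prod>v\<in>{offs a (Suc r)..<offs a (Suc r) + a (Suc r)}. g (Suc r))"
    using bag_eq[of "Suc r" a] by (intro prod.cong) auto
  also have "\<dots> = g (Suc r) ^ a (Suc r)" by simp
  finally show ?case using Suc by (simp add: atLeastAtMostSuc_conv mult.commute)
qed



lemma mult_entry: assumes "A \<in> carrier_mat nr k" "B \<in> carrier_mat k nc" "i < nr" "j < nc"
  shows "(A * B) $$ (i,j) = (\<Sum>l<k. A $$ (i,l) * B $$ (l,j))"
  using assms by (simp add: scalar_prod_def atLeast0LessThan)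

lemma offs_minus1: assumes "\<And>i. 1 \<le> i \<Longrightarrow> i \<le> r \<Longrightarrow> a i \<ge> 1"
  shows "offs a (Suc r) = offs (\<lambda>i. a i - 1) (Suc r) + r"
  using assms
proof (induction r)
  case 0 then show ?case by simp
next
  case (Suc r)
  have "offs a (Suc (Suc r)) = offs a (Suc r) + a (Suc r)" by (rule offs_Suc) simp
  moreover have "offs (\<lambda>i. a i - 1) (Suc (Suc r)) = offs (\<lambda>i. a i - 1) (Suc r) + (a (Suc r) - 1)" by (rule offs_Suc) simp
  moreover obtain c where "a (Suc r) = Suc c" using Suc.prems[of "Suc r"] by (cases "a (Suc r)") auto
  ultimately show ?case using Suc by simp
qed

locale eqp =
  fixes a :: "nat \<Rightarrow> nat" and r :: nat and s :: "nat \<Rightarrow> 'a::field_char_0"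
    and S :: "nat \<Rightarrow> nat \<Rightarrow> 'a" and d :: "nat \<Rightarrow> 'a"
  assumes apos: "\<And>i. 1 \<le> i \<Longrightarrow> i \<le> r \<Longrightarrow> a i \<ge> 1"
    and ss: "\<And>i. 1 \<le> i \<Longrightarrow> i \<le> r \<Longrightarrow> s i * s i = of_nat (a i)"
begin

definition "n = offs a (Suc r)"
definition "a' = (\<lambda>i. a i - 1)"
definition "m = offs a' (Suc r)"
definition "bg v = bag a v"
definition "sig t = (let k = t - r; b = bag a' k in offs a b + 1 + (k - offs a' b))"

definition "MM = mat n n (\<lambda>(u,v). S (bg u) (bg v) + (if u = v then d (bg u) else 0))"
definition "TT = mat r r (\<lambda>(i,j). S (Suc i) (Suc j) * s (Suc i) * s (Suc j) + (if i = j then d (Suc i) else 0))"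
definition "DD = mat m m (\<lambda>(k,l). if k = l then d (bag a' k) else 0)"
definition "NN = four_block_mat TT (0\<^sub>m r m) (0\<^sub>m m r) DD"
definition "PP = mat n n (\<lambda>(v,t). if t < r then (if bg v = Suc t then inverse (s (Suc t)) else 0)
   else (if v = sig t then 1 else 0) - (if v = offs a (bg (sig t)) then 1 else 0))"
definition "QQ = mat n n (\<lambda>(t,v). if t < r then (if bg v = Suc t then inverse (s (Suc t)) else 0)
   else (if v = sig t then 1 else 0) - (if bg v = bg (sig t) then inverse (of_nat (a (bg (sig t)))) else 0))"

lemma n_eq: "n = r + m"
  unfolding n_def m_def a'_def using offs_minus1[of r a] apos by simp

lemma s_nz: "1 \<le> i \<Longrightarrow> i \<le> r \<Longrightarrow> s i \<noteq> 0"
  using ss[of i] apos[of i] by auto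

lemma bg_props: assumes "v < n"
  shows "1 \<le> bg v" "bg v \<le> r" "offs a (bg v) \<le> v" "v < offs a (bg v) + a (bg v)"
  using bag_props[of v a r] assms unfolding n_def bg_def by auto

lemma bg_offs: assumes "1 \<le> i" "i \<le> r" shows "bg (offs a i) = i" "offs a i < n"
  using bag_eq[OF assms(1), of a "offs a i"] apos[OF assms] bag_range[OF assms, of a]
  unfolding bg_def n_def by auto

lemma sig_props: assumes "r \<le> t" "t < n"
  shows "sig t < n" "bg (sig t) = bag a' (t - r)" "sig t \<noteq> offs a (bg (sig t))"
    "1 \<le> bg (sig t)" "bg (sig t) \<le> r"
proof -
  define k where "k = t - r"
  define b where "b = bag a' k"
  have k: "k < offs a' (Suc r)" using assms n_eq unfolding k_def m_def by simp
  note bp = bag_props[OF k]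
  have b1: "1 \<le> b" "b \<le> r" using bp unfolding b_def by auto
  have a'b: "a' b = a b - 1" unfolding a'_def by simp
  have sg: "sig t = offs a b + 1 + (k - offs a' b)" unfolding sig_def k_def b_def Let_def by simp
  have lo: "offs a b < sig t" using sg by simp
  have hi: "sig t < offs a b + a b" using sg bp(3,4) a'b unfolding b_def by simp
  have bgs: "bg (sig t) = b" unfolding bg_def using bag_eq[OF b1(1), of a "sig t"] lo hi by simp
  show "bg (sig t) = bag a' (t - r)" using bgs unfolding b_def k_def .
  show "sig t \<noteq> offs a (bg (sig t))" using bgs lo by simp
  show "sig t < n" using hi bag_range[OF b1, of a] unfolding n_def by simp
  show "1 \<le> bg (sig t)" "bg (sig t) \<le> r" using bgs b1 by auto
qed

lemma sig_inj: assumes "r \<le> t" "t < n" "r \<le> t'" "t' < n" "sig t = sig t'" shows "t = t'"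
proof -
  have b: "bag a' (t - r) = bag a' (t' - r)" using sig_props(2)[OF assms(1,2)] sig_props(2)[OF assms(3,4)] assms(5) by simp
  then have "t - r - offs a' (bag a' (t - r)) = t' - r - offs a' (bag a' (t' - r))"
    using assms(5) unfolding sig_def Let_def by simp
  moreover have "offs a' (bag a' (t - r)) \<le> t - r" "offs a' (bag a' (t' - r)) \<le> t' - r"
    using bag_props(3)[of "t - r" a' r] bag_props(3)[of "t' - r" a' r] assms n_eq unfolding m_def by auto
  ultimately have "t - r - offs a' (bag a' (t - r)) = t' - r - offs a' (bag a' (t - r))"
    "offs a' (bag a' (t - r)) \<le> t - r" "offs a' (bag a' (t - r)) \<le> t' - r" using b by auto
  then have "t - r = t' - r" by linarith
  then show ?thesis using assms by linarith
qed

lemma sum_bg: assumes "1 \<le> i" "i \<le> r"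
  shows "(\<Sum>v<n. if bg v = i then c else 0) = of_nat (a i) * c"
  using sum_bag[OF assms, of a "\<lambda>_. c"] unfolding n_def bg_def by simp

lemma carriers: "MM \<in> carrier_mat n n" "PP \<in> carrier_mat n n" "QQ \<in> carrier_mat n n" "NN \<in> carrier_mat n n"
  "TT \<in> carrier_mat r r" "DD \<in> carrier_mat m m"
  unfolding MM_def PP_def QQ_def NN_def TT_def DD_def using n_eq by auto

lemma PP_idx: "v < n \<Longrightarrow> t < n \<Longrightarrow> PP $$ (v,t) = (if t < r then (if bg v = Suc t then inverse (s (Suc t)) else 0)
   else (if v = sig t then 1 else 0) - (if v = offs a (bg (sig t)) then 1 else 0))"
  unfolding PP_def by simp

lemma QQ_idx: "t < n \<Longrightarrow> v < n \<Longrightarrow> QQ $$ (t,v) = (if t < r then (if bg v = Suc t then inverse (s (Suc t)) else 0)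
   else (if v = sig t then 1 else 0) - (if bg v = bg (sig t) then inverse (of_nat (a (bg (sig t)))) else 0))"
  unfolding QQ_def by simp

lemma sumd: "x < n \<Longrightarrow> (\<Sum>v<n. if v = x then c else 0) = c"
  by (simp add: sum.delta)

lemma QP: "QQ * PP = 1\<^sub>m n"
proof (rule eq_matI)
  show "dim_row (QQ * PP) = dim_row (1\<^sub>m n)" "dim_col (QQ * PP) = dim_col (1\<^sub>m n)"
    using carriers by auto
  fix t t' assume "t < dim_row (1\<^sub>m n)" "t' < dim_col (1\<^sub>m n)"
  then have t: "t < n" and t': "t' < n" by auto
  have e: "(QQ * PP) $$ (t,t') = (\<Sum>v<n. QQ $$ (t,v) * PP $$ (v,t'))"
    by (rule mult_entry[OF carriers(3,2) t t'])
  show "(QQ * PP) $$ (t,t') = 1\<^sub>m n $$ (t,t')"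
  proof (cases "t < r")
    case True
    note tr = True
    show ?thesis
    proof (cases "t' < r")
      case True
      have "(\<Sum>v<n. QQ $$ (t,v) * PP $$ (v,t')) = (\<Sum>v<n. if bg v = Suc t then (if t = t' then inverse (s (Suc t)) * inverse (s (Suc t)) else 0) else 0)"
        by (rule sum.cong, simp, simp add: QQ_idx PP_idx t t' tr True)
      also have "\<dots> = of_nat (a (Suc t)) * (if t = t' then inverse (s (Suc t)) * inverse (s (Suc t)) else 0)"
        by (rule sum_bg) (use tr in auto)
      also have "\<dots> = (if t = t' then 1 else 0)"
        using ss[of "Suc t"] s_nz[of "Suc t"] tr by (auto simp: field_simps)
      finally show ?thesis using e t t' by simp
    next
      case False
      define w where "w = sig t'"
      define f where "f = offs a (bg w)"
      have w: "w < n" "bg f = bg w" "w \<noteq> f" "f < n"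
        using sig_props[of t'] bg_offs[of "bg w"] False t' unfolding w_def f_def by auto
      have "(\<Sum>v<n. QQ $$ (t,v) * PP $$ (v,t')) = (\<Sum>v<n. (if v = w then (if bg w = Suc t then inverse (s (Suc t)) else 0) else 0) - (if v = f then (if bg f = Suc t then inverse (s (Suc t)) else 0) else 0))"
        by (rule sum.cong, simp, simp add: QQ_idx PP_idx t t' tr False w_def[symmetric] f_def[symmetric])
      also have "\<dots> = 0" unfolding sum_subtractf using sumd w by simp
      finally show ?thesis using e t t' tr False by simp
    qed
  next
    case False
    note tr = False
    define w where "w = sig t"
    define k where "k = bg w"
    have w: "w < n" "1 \<le> k" "k \<le> r" "w \<noteq> offs a k"
      using sig_props[of t] tr t unfolding w_def k_def by auto
    show ?thesis
    proof (cases "t' < r")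
      case True
      have "(\<Sum>v<n. QQ $$ (t,v) * PP $$ (v,t')) = (\<Sum>v<n. (if v = w then (if k = Suc t' then inverse (s (Suc t')) else 0) else 0) - (if bg v = Suc t' then (if k = Suc t' then inverse (of_nat (a k)) * inverse (s (Suc t')) else 0) else 0))"
        by (rule sum.cong, simp, auto simp add: QQ_idx PP_idx t t' tr True w_def[symmetric] k_def[symmetric] left_diff_distrib)
      also have "\<dots> = (if k = Suc t' then inverse (s (Suc t')) else 0) - of_nat (a (Suc t')) * (if k = Suc t' then inverse (of_nat (a k)) * inverse (s (Suc t')) else 0)"
        using True by (cases "k = Suc t'") (simp_all add: sum_subtractf sum_bg w(1) sum.delta)
      also have "\<dots> = 0" using apos[of k] w by auto
      finally show ?thesis using e t t' tr True by simp
    next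
      case False
      define w' where "w' = sig t'"
      define f where "f = offs a (bg w')"
      have w': "w' < n" "bg f = bg w'" "w \<noteq> f" "f < n"
        using sig_props[of t'] bg_offs[of "bg w'"] False t' w unfolding w'_def f_def k_def 
        by (auto)
      have ww: "(w = w') = (t = t')" using sig_inj[of t t'] tr False t t' unfolding w_def w'_def by auto
      have "(\<Sum>v<n. QQ $$ (t,v) * PP $$ (v,t')) = (\<Sum>v<n. (if v = w then (if w = w' then 1 else 0) else 0) - (if v = w then (if w = f then 1 else 0) else 0)
           - (if v = w' then (if bg w' = k then inverse (of_nat (a k)) else 0) else 0) + (if v = f then (if bg f = k then inverse (of_nat (a k)) else 0) else 0))"
        by (rule sum.cong, simp, auto simp add: QQ_idx PP_idx t t' tr False w_def[symmetric] k_def[symmetric] w'_def[symmetric] f_def[symmetric])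
      also have "\<dots> = (if w = w' then 1 else 0)" unfolding sum.distrib sum_subtractf using sumd w w' by simp
      finally show ?thesis using e t t' tr False ww by simp
    qed
  qed
qed

lemma TT_idx: "i < r \<Longrightarrow> j < r \<Longrightarrow> TT $$ (i,j) = S (Suc i) (Suc j) * s (Suc i) * s (Suc j) + (if i = j then d (Suc i) else 0)"
  unfolding TT_def by simp

lemma MM_idx: "u < n \<Longrightarrow> v < n \<Longrightarrow> MM $$ (u,v) = S (bg u) (bg v) + (if u = v then d (bg u) else 0)"
  unfolding MM_def by simp

lemma NN_idx: "t' < n \<Longrightarrow> t < n \<Longrightarrow> NN $$ (t',t) = (if t' < r then (if t < r then
    S (Suc t') (Suc t) * s (Suc t') * s (Suc t) + (if t' = t then d (Suc t') else 0) else 0)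
    else (if t < r then 0 else (if t' = t then d (bag a' (t - r)) else 0)))"
  unfolding NN_def using n_eq by (auto simp: TT_def DD_def)

lemma MP: "MM * PP = PP * NN"
proof (rule eq_matI)
  show "dim_row (MM * PP) = dim_row (PP * NN)" "dim_col (MM * PP) = dim_col (PP * NN)"
    using carriers by auto
  fix v t assume "v < dim_row (PP * NN)" "t < dim_col (PP * NN)"
  then have v: "v < n" and t: "t < n" using carriers by auto
  have e1: "(MM * PP) $$ (v,t) = (\<Sum>u<n. MM $$ (v,u) * PP $$ (u,t))"
    by (rule mult_entry[OF carriers(1,2) v t])
  have e2: "(PP * NN) $$ (v,t) = (\<Sum>u<n. PP $$ (v,u) * NN $$ (u,t))"
    by (rule mult_entry[OF carriers(2,4) v t])
  note bv = bg_props[OF v]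
  show "(MM * PP) $$ (v,t) = (PP * NN) $$ (v,t)"
  proof (cases "t < r")
    case True
    define j where "j = Suc t"
    have j: "1 \<le> j" "j \<le> r" using True unfolding j_def by auto
    have "(\<Sum>u<n. MM $$ (v,u) * PP $$ (u,t)) = (\<Sum>u<n. (if bg u = j then S (bg v) j * inverse (s j) else 0)
         + (if u = v then (if bg v = j then d (bg v) * inverse (s j) else 0) else 0))"
      by (rule sum.cong, simp, auto simp add: MM_idx PP_idx v t True j_def[symmetric] distrib_right)
    also have "\<dots> = of_nat (a j) * (S (bg v) j * inverse (s j)) + (if bg v = j then d (bg v) * inverse (s j) else 0)"
      unfolding sum.distrib using sum_bg[OF j] v by (simp add: sum.delta)
    finally have l: "(MM * PP) $$ (v,t) = \<dots>" using e1 by simp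
    have "(\<Sum>u<n. PP $$ (v,u) * NN $$ (u,t)) = (\<Sum>u<n. if u = bg v - 1 then inverse (s (bg v)) *
        (S (bg v) j * s (bg v) * s j + (if bg v = j then d (bg v) else 0)) else 0)"
    proof (rule sum.cong, simp)
      fix u assume "u \<in> {..<n}"
      then have u: "u < n" by simp
      show "PP $$ (v,u) * NN $$ (u,t) = (if u = bg v - 1 then inverse (s (bg v)) *
        (S (bg v) j * s (bg v) * s j + (if bg v = j then d (bg v) else 0)) else 0)"
      proof (cases "u = bg v - 1")
        case True
        then have "u < r" "Suc u = bg v" using bv by auto
        then show ?thesis using True u t \<open>t < r\<close> by (auto simp: PP_idx NN_idx v j_def)
      next
        case False
        then show ?thesis using u t \<open>t < r\<close> bv by (auto simp: PP_idx NN_idx v j_def)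
      qed
    qed
    also have "\<dots> = inverse (s (bg v)) * (S (bg v) j * s (bg v) * s j + (if bg v = j then d (bg v) else 0))"
      using bv n_eq by (simp add: sum.delta)
    finally have r: "(PP * NN) $$ (v,t) = \<dots>" using e2 by simp
    have sj: "s j \<noteq> 0" "s (bg v) \<noteq> 0" using s_nz j bv by auto
    have aj: "of_nat (a j) = s j * s j" using ss[OF j] by simp
    show ?thesis unfolding l r aj using sj by (auto simp: field_simps)
  next
    case False
    define w where "w = sig t"
    define k where "k = bg w"
    define f where "f = offs a k"
    have w: "w < n" "1 \<le> k" "k \<le> r" "w \<noteq> f" "f < n" "bag a' (t - r) = k"
      using sig_props[of t] bg_offs[of k] False t unfolding w_def k_def f_def by auto
    have "(\<Sum>u<n. MM $$ (v,u) * PP $$ (u,t)) = (\<Sum>u<n. (if u = w then MM $$ (v,w) else 0) - (if u = f then MM $$ (v,f) else 0))"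
      by (rule sum.cong, simp, auto simp add: PP_idx v t False w_def[symmetric] k_def[symmetric] f_def[symmetric])
    also have "\<dots> = MM $$ (v,w) - MM $$ (v,f)" unfolding sum_subtractf using w by (simp add: sum.delta)
    finally have l: "(MM * PP) $$ (v,t) = MM $$ (v,w) - MM $$ (v,f)" using e1 by simp
    have "(\<Sum>u<n. PP $$ (v,u) * NN $$ (u,t)) = (\<Sum>u<n. if u = t then PP $$ (v,t) * d k else 0)"
      by (rule sum.cong, simp, auto simp add: NN_idx t False w)
    also have "\<dots> = PP $$ (v,t) * d k" using t by (simp add: sum.delta)
    finally have r: "(PP * NN) $$ (v,t) = PP $$ (v,t) * d k" using e2 by simp
    have bgf: "bg f = k" using bg_offs w unfolding f_def by auto
    show ?thesis unfolding l r using w v bgf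
      by (auto simp: MM_idx PP_idx t False w_def[symmetric] k_def[symmetric] f_def[symmetric])
  qed
qed

lemma PQ: "PP * QQ = 1\<^sub>m n"
  by (rule mat_mult_left_right_inverse[OF carriers(3,2) QP])

lemma MM_eq: "MM = PP * NN * QQ"
proof -
  have "MM = MM * (PP * QQ)" unfolding PQ using carriers(1) by simp
  also have "\<dots> = (MM * PP) * QQ" using carriers by (simp add: assoc_mult_mat)
  finally show ?thesis unfolding MP .
qed

lemma sim: "similar_mat MM NN"
  by (rule similar_matI[of MM NN PP QQ n]) (use carriers PQ QP MM_eq in auto)

lemma cpNN: "char_poly NN = char_poly TT * char_poly DD"
proof -
  have "char_poly_matrix NN = four_block_mat (char_poly_matrix TT) (0\<^sub>m r m) (0\<^sub>m m r) (char_poly_matrix DD)"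
    unfolding char_poly_matrix_def NN_def
    by (rule eq_matI, insert carriers(5,6), auto simp: one_poly_def)
  then have "char_poly NN = det (four_block_mat (char_poly_matrix TT) (0\<^sub>m r m) (0\<^sub>m m r) (char_poly_matrix DD))"
    unfolding char_poly_def by simp
  also have "\<dots> = det (char_poly_matrix TT) * det (char_poly_matrix DD)"
    by (rule det_four_block_mat_lower_left_zero, insert carriers(5,6), auto)
  finally show ?thesis unfolding char_poly_def .
qed

lemma cpDD: "char_poly DD = (\<Prod>i\<in>{1..r}. [:- d i, 1:] ^ (a i - 1))"
proof -
  have ut: "upper_triangular DD" unfolding upper_triangular_def DD_def by auto
  have "char_poly DD = (\<Prod>x\<leftarrow>diag_mat DD. [:- x, 1:])"
    by (rule char_poly_upper_triangular[OF carriers(6) ut])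
  also have "diag_mat DD = map (\<lambda>k. d (bag a' k)) [0..<m]"
    unfolding diag_mat_def DD_def by auto
  also have "(\<Prod>x\<leftarrow>map (\<lambda>k. d (bag a' k)) [0..<m]. [:- x, 1:]) = (\<Prod>k\<in>{0..<m}. [:- d (bag a' k), 1:])"
    using prod.distinct_set_conv_list[of "[0..<m]" "\<lambda>k. [:- d (bag a' k), 1:]"] by (simp add: comp_def)
  also have "\<dots> = (\<Prod>i\<in>{1..r}. [:- d i, 1:] ^ a' i)"
    using prod_bag[where a=a' and r=r and g="\<lambda>i. [:- d i, 1:]"] unfolding m_def by (simp add: atLeast0LessThan)
  finally show ?thesis unfolding a'_def .
qed

lemma main_gen: "char_poly MM = char_poly TT * (\<Prod>i\<in>{1..r}. [:- d i, 1:] ^ (a i - 1))"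
  using char_poly_similar[OF sim] cpNN cpDD by simp

end


lemma odd_mod4: "odd (i::nat) \<Longrightarrow> i mod 4 = 1 \<or> i mod 4 = 3" by presburger
lemma even_mod4: "even (i::nat) \<Longrightarrow> i mod 4 = 0 \<or> i mod 4 = 2" by presburger

lemma sum_replicate_mset: "finite I \<Longrightarrow> (\<Sum>i\<in>I. replicate_mset (f i) x) = replicate_mset (\<Sum>i\<in>I. f i) x"
  by (rule multiset_eqI) (simp add: count_sum)

lemma sum_replicate_mset_cong: assumes "\<And>i. i \<in> I \<Longrightarrow> g i = x" "finite I"
  shows "(\<Sum>i\<in>I. replicate_mset (f i) (g i)) = replicate_mset (\<Sum>i\<in>I. f i) x"
  using sum_replicate_mset[OF assms(2), of f x] assms(1) by (metis (no_types, lifting) sum.cong)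

theorem mainTheorem3:
  fixes lam :: real and r :: nat and a :: "nat \<Rightarrow> nat"
    and epsij :: "nat \<Rightarrow> nat \<Rightarrow> real"
  assumes "lam \<noteq> 0" and "r \<ge> 1"
    and "\<And>i. 1 \<le> i \<Longrightarrow> i \<le> r \<Longrightarrow> a i \<ge> 1"
    and "\<And>i j. 1 \<le> i \<Longrightarrow> i < j \<Longrightarrow> j \<le> r \<Longrightarrow> even j \<Longrightarrow> epsij i j \<noteq> 0"
  defines "p \<equiv> (\<lambda>i. if i mod 4 = 1 then 0
                     else if i mod 4 = 2 then lam * (real (a i) - 1) / real (a i)
                     else if i mod 4 = 3 then lam
                     else lam / real (a i))"
    and "eps \<equiv> (\<lambda>i. if i mod 4 = 1 then 0
                     else if i mod 4 = 2 then - lam / real (a i)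
                     else if i mod 4 = 3 then 0
                     else lam / real (a i))"
    and "p1 \<equiv> (\<lambda>i. if i mod 4 = 1 \<or> i mod 4 = 2 then 0 else lam)"
    and "epsij1 \<equiv> (\<lambda>i j. epsij i j * sqrt (real (a i) * real (a j)))"
    and "A \<equiv> (\<Sum>i\<in>{i\<in>{1..r}. i mod 4 = 0 \<or> i mod 4 = 1}. a i - 1)"
    and "B \<equiv> (\<Sum>i\<in>{i\<in>{1..r}. i mod 4 = 2 \<or> i mod 4 = 3}. a i - 1)"
  shows "Spec (uniform_weighted_matrix a r p eps epsij)
           = Spec (single_thr_matrix 1 r p1 epsij1)
             + replicate_mset A 0 + replicate_mset B (complex_of_real lam)"
proof -
  note apos = assms(3)
  define s where "s = (\<lambda>i. complex_of_real (sqrt (real (a i))))"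
  define S where "S = (\<lambda>i j. complex_of_real (if i = j then eps i else if even (max i j) then epsij (min i j) (max i j) else 0))"
  define d where "d = (\<lambda>i. complex_of_real (p i - eps i))"
  interpret E: eqp a r s S d
  proof
    fix i assume i: "1 \<le> i" "i \<le> r"
    show "a i \<ge> 1" using apos[OF i] .
    have "s i * s i = complex_of_real (sqrt (real (a i)) * sqrt (real (a i)))" unfolding s_def of_real_mult ..
    also have "\<dots> = of_nat (a i)" by simp
    finally show "s i * s i = of_nat (a i)" .
  qed
  have epsodd: "odd i \<Longrightarrow> eps i = 0" for i using odd_mod4[of i] unfolding eps_def by auto
  have M: "map_mat complex_of_real (uniform_weighted_matrix a r p eps epsij) = E.MM"
  proof (rule eq_matI)
    show "dim_row (map_mat complex_of_real (uniform_weighted_matrix a r p eps epsij)) = dim_row E.MM"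
      "dim_col (map_mat complex_of_real (uniform_weighted_matrix a r p eps epsij)) = dim_col E.MM"
      using E.carriers(1) unfolding uniform_weighted_matrix_def E.n_def nverts_offs by auto
    fix u v assume "u < dim_row E.MM" "v < dim_col E.MM"
    then have u: "u < E.n" and v: "v < E.n" using E.carriers(1) by auto
    show "map_mat complex_of_real (uniform_weighted_matrix a r p eps epsij) $$ (u, v) = E.MM $$ (u, v)"
    proof -
      have e: "E.MM $$ (u, v) = S (bag a u) (bag a v) + (if u = v then d (bag a u) else 0)"
        using E.MM_idx[OF u v] unfolding E.bg_def .
      have u': "u < nverts a r" and v': "v < nverts a r" using u v unfolding E.n_def nverts_offs .
      show ?thesis unfolding e using u' v' epsodd[of "bag a u"]
        by (auto simp: uniform_weighted_matrix_def S_def d_def thr_adj_def Let_def)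
    qed
  qed
  have T: "map_mat complex_of_real (single_thr_matrix 1 r p1 epsij1) = E.TT"
  proof (rule eq_matI)
    show "dim_row (map_mat complex_of_real (single_thr_matrix 1 r p1 epsij1)) = dim_row E.TT"
      "dim_col (map_mat complex_of_real (single_thr_matrix 1 r p1 epsij1)) = dim_col E.TT"
      using E.carriers(5) unfolding single_thr_matrix_def by auto
    fix x y assume "x < dim_row E.TT" "y < dim_col E.TT"
    then have x: "x < r" and y: "y < r" using E.carriers(5) by auto
    show "map_mat complex_of_real (single_thr_matrix 1 r p1 epsij1) $$ (x, y) = E.TT $$ (x, y)"
    proof (cases "x = y")
      case True
      have ai: "real (a (Suc x)) \<ge> 1" using apos[of "Suc x"] x by simp
      have "p1 (Suc x) = eps (Suc x) * real (a (Suc x)) + (p (Suc x) - eps (Suc x))"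
        using ai unfolding p1_def eps_def p_def by (auto simp: field_simps)
      then have "complex_of_real (p1 (Suc x)) = S (Suc x) (Suc x) * s (Suc x) * s (Suc x) + d (Suc x)"
        unfolding S_def s_def d_def by (simp add: mult.assoc flip: of_real_mult)
      then show ?thesis using True x unfolding E.TT_idx[OF x y] single_thr_matrix_def by simp
    next
      case False
      have sq: "sqrt (real (a (Suc (min x y))) * real (a (Suc (max x y)))) = sqrt (real (a (Suc x))) * sqrt (real (a (Suc y)))"
        by (cases "x < y") (auto simp: real_sqrt_mult min_def max_def)
      show ?thesis using False x y unfolding E.TT_idx[OF x y] unfolding single_thr_matrix_def S_def s_def epsij1_def
        by (simp add: sq mult.assoc flip: of_real_mult)
    qed
  qed
  have main: "char_poly E.MM = char_poly E.TT * (\<Prod>i\<in>{1..r}. [:- d i, 1:] ^ (a i - 1))"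
    by (rule E.main_gen)
  have nz1: "char_poly E.TT \<noteq> 0" using degree_monic_char_poly[OF E.carriers(5)] by auto
  have nz2: "(\<Prod>i\<in>{1..r}. [:- d i, 1:] ^ (a i - 1)) \<noteq> 0" by (simp add: prod_zero_iff)
  have "proots (\<Prod>i\<in>{1..r}. [:- d i, 1:] ^ (a i - 1)) = (\<Sum>i\<in>{1..r}. replicate_mset (a i - 1) (d i))"
    by (subst proots_prod) (auto simp: proots_power)
  also have "\<dots> = (\<Sum>i\<in>{i\<in>{1..r}. i mod 4 = 0 \<or> i mod 4 = 1}. replicate_mset (a i - 1) (d i))
      + (\<Sum>i\<in>{i\<in>{1..r}. i mod 4 = 2 \<or> i mod 4 = 3}. replicate_mset (a i - 1) (d i))"
    by (subst sum.union_disjoint[symmetric]) (auto intro!: sum.cong)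
  also have "\<dots> = replicate_mset A 0 + replicate_mset B (complex_of_real lam)"
  proof -
    have "(\<Sum>i\<in>{i\<in>{1..r}. i mod 4 = 0 \<or> i mod 4 = 1}. replicate_mset (a i - 1) (d i)) = replicate_mset A 0"
      unfolding A_def
    proof (rule sum_replicate_mset_cong)
      fix i assume "i \<in> {i\<in>{1..r}. i mod 4 = 0 \<or> i mod 4 = 1}"
      then show "d i = 0" unfolding d_def p_def eps_def by auto
    qed simp
    moreover have "(\<Sum>i\<in>{i\<in>{1..r}. i mod 4 = 2 \<or> i mod 4 = 3}. replicate_mset (a i - 1) (d i)) = replicate_mset B (complex_of_real lam)"
      unfolding B_def
    proof (rule sum_replicate_mset_cong)
      fix i assume i: "i \<in> {i\<in>{1..r}. i mod 4 = 2 \<or> i mod 4 = 3}"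
      then have "real (a i) \<ge> 1" using apos[of i] by auto
      then show "d i = complex_of_real lam" using i unfolding d_def p_def eps_def by (auto simp: field_simps)
    qed simp
    ultimately show ?thesis by simp
  qed
  finally have pr: "proots (\<Prod>i\<in>{1..r}. [:- d i, 1:] ^ (a i - 1)) = replicate_mset A 0 + replicate_mset B (complex_of_real lam)" .
  show ?thesis
    unfolding Spec_def M T main proots_mult[OF nz1 nz2] pr by (simp add: add.assoc)
qed

end
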